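(* Let $q$ be a prime power and let $n\le m$ and $k\le n$ be positive integers. Let $\alpha_0,\dots,\alpha_{n-1}\in\mathbb F_{q^m}$ be linearly independent over $\mathbb F_q$, and let $\mathcal G$ be the Gabidulin code $$\mathcal G=\{(f(\alpha_0),\dots,f(\alpha_{n-1})) : f(x)=\textstyle\sum_{i} f_i x^{q^i},\ f_i\in\mathbb F_{q^m},\ \deg_q f<k\},$$ which has minimum rank distance $d=n-k+1$. Let $\tau<d$. Then there exists a word $\mathbf r\in\mathbb F_{q^m}^n$ such that the maximum list size $\ell=\ell(m,n,d,\tau)=\max_{\mathbf y\in\mathbb F_{q^m}^n}|\mathcal G\cap\mathcal B_\tau(\mathbf y)|$ satisfies $$\ell\ \ge\ |\mathcal G\cap\mathcal S_\tau(\mathbf r)|\ \ge\ \frac{\binom{n}{n-\tau}_q}{(q^m)^{n-\tau-k}}\ \ge\ q^m\, q^{\tau(m+n)-\tau^2-md},$$ and in the special case $n=m$, $\ell\ge q^n q^{2n\tau-\tau^2-nd}$.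
   Context: Fixing a basis of $\mathbb F_{q^m}$ over $\mathbb F_q$, each vector $\mathbf x\in\mathbb F_{q^m}^n$ is identified with an $m\times n$ matrix over $\mathbb F_q$; $\mathrm{rk}(\mathbf x)$ denotes the rank of this matrix, and the rank distance is $d_R(\mathbf x,\mathbf y)=\mathrm{rk}(\mathbf x-\mathbf y)$. $\mathcal B_\tau(\mathbf a)=\{\mathbf x\in\mathbb F_{q^m}^n:\mathrm{rk}(\mathbf x-\mathbf a)\le\tau\}$ and $\mathcal S_\tau(\mathbf a)=\{\mathbf x:\mathrm{rk}(\mathbf x-\mathbf a)=\tau\}$. For a linearized polynomial $f(x)=\sum_i f_i x^{q^i}$, $\deg_q f$ is the largest $i$ with $f_i\neq0$. The Gaussian binomial is $\binom{n}{r}_q=\prod_{i=0}^{r-1}\frac{q^n-q^i}{q^r-q^i}$. *)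

theory Defs
  imports Complex_Main "HOL-Computational_Algebra.Primes"
begin

text \<open>The field F_{q^m} is a finite field type 'a with CARD('a) = q^m; its
subfield F_q is the set of roots of x^q - x.  Vectors of F_{q^m}^n are functions
nat => 'a vanishing outside {..<n}.\<close>

definition prime_power :: "nat \<Rightarrow> bool" where
  "prime_power q \<longleftrightarrow> (\<exists>p e. prime p \<and> e \<ge> 1 \<and> q = p ^ e)"

definition Fq :: "nat \<Rightarrow> 'a::field set" where
  "Fq q = {x. x ^ q = x}"

definition words :: "nat \<Rightarrow> (nat \<Rightarrow> 'a::field) set" where
  "words n = {y. \<forall>i\<ge>n. y i = 0}"

definition lin_indep_Fq :: "nat \<Rightarrow> nat set \<Rightarrow> (nat \<Rightarrow> 'a::field) \<Rightarrow> bool" where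
  "lin_indep_Fq q I x \<longleftrightarrow>
     (\<forall>c. (\<forall>i\<in>I. c i \<in> Fq q) \<longrightarrow> (\<Sum>i\<in>I. c i * x i) = 0 \<longrightarrow> (\<forall>i\<in>I. c i = 0))"

text \<open>Rank of x in F_{q^m}^n: rank of its m x n matrix over F_q, i.e. the
maximal number of F_q-linearly independent columns (entries).\<close>
definition rk :: "nat \<Rightarrow> nat \<Rightarrow> (nat \<Rightarrow> 'a::field) \<Rightarrow> nat" where
  "rk q n x = Max {card I | I. I \<subseteq> {..<n} \<and> lin_indep_Fq q I x}"

definition rank_ball :: "nat \<Rightarrow> nat \<Rightarrow> nat \<Rightarrow> (nat \<Rightarrow> 'a::field) \<Rightarrow> (nat \<Rightarrow> 'a) set" where
  "rank_ball q n \<tau> a = {x \<in> words n. rk q n (x - a) \<le> \<tau>}"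

definition rank_sphere :: "nat \<Rightarrow> nat \<Rightarrow> nat \<Rightarrow> (nat \<Rightarrow> 'a::field) \<Rightarrow> (nat \<Rightarrow> 'a) set" where
  "rank_sphere q n \<tau> a = {x \<in> words n. rk q n (x - a) = \<tau>}"

definition gabidulin :: "nat \<Rightarrow> nat \<Rightarrow> nat \<Rightarrow> (nat \<Rightarrow> 'a::field) \<Rightarrow> (nat \<Rightarrow> 'a) set" where
  "gabidulin q n k \<alpha> =
     {(\<lambda>i. if i < n then (\<Sum>j<k. f j * \<alpha> i ^ (q ^ j)) else 0) | f. True}"

definition max_list_size :: "nat \<Rightarrow> nat \<Rightarrow> nat \<Rightarrow> (nat \<Rightarrow> 'a::field) set \<Rightarrow> nat" where
  "max_list_size q n \<tau> C = Max ((\<lambda>y. card (C \<inter> rank_ball q n \<tau> y)) ` words n)"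

definition gauss_binom :: "nat \<Rightarrow> nat \<Rightarrow> nat \<Rightarrow> real" where
  "gauss_binom q n r = (\<Prod>i<r. (real q ^ n - real q ^ i) / (real q ^ r - real q ^ i))"

end

theory Submission
  imports Defs "HOL-Number_Theory.Residues" "HOL-Computational_Algebra.Polynomial" "HOL-Library.FuncSet"
begin

lemma frob_prime:
  fixes x y :: "'a::comm_ring_1"
  assumes "prime p" "of_nat p = (0::'a)"
  shows "(x + y) ^ p = x ^ p + y ^ p"
proof -
  have "(x + y) ^ p = (\<Sum>k\<le>p. of_nat (p choose k) * x ^ k * y ^ (p - k))"
    by (simp add: binomial_ring)
  also have "\<dots> = (\<Sum>k\<in>{0,p}. of_nat (p choose k) * x ^ k * y ^ (p - k))"
  proof (rule sum.mono_neutral_right)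
    show "\<forall>k\<in>{..p} - {0, p}. of_nat (p choose k) * x ^ k * y ^ (p - k) = 0"
    proof
      fix k assume k: "k \<in> {..p} - {0, p}"
      have "p dvd (p choose k)" using k assms(1)
        by (intro dvd_choose_prime) (auto simp: prime_gt_0_nat)
      then obtain t where "p choose k = p * t" by blast
      then show "of_nat (p choose k) * x ^ k * y ^ (p - k) = 0" using assms(2) by simp
    qed
  qed auto
  also have "\<dots> = x ^ p + y ^ p" using assms(1) prime_gt_0_nat[OF assms(1)]
    by (simp add: add.commute)
  finally show ?thesis .
qed

lemma frob_prime_pow:
  fixes x y :: "'a::comm_ring_1"
  assumes "prime p" "of_nat p = (0::'a)"
  shows "(x + y) ^ (p ^ t) = x ^ (p ^ t) + y ^ (p ^ t)"
proof (induction t)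
  case (Suc t)
  have "(x + y) ^ (p ^ Suc t) = ((x + y) ^ (p ^ t)) ^ p"
    by (simp add: power_mult[symmetric] mult.commute)
  also have "\<dots> = (x ^ (p ^ t)) ^ p + (y ^ (p ^ t)) ^ p"
    using Suc frob_prime[OF assms] by simp
  also have "\<dots> = x ^ (p ^ Suc t) + y ^ (p ^ Suc t)"
    by (simp add: power_mult[symmetric] mult.commute)
  finally show ?case .
qed simp

lemma card_ker_img:
  fixes \<phi> :: "'b::ab_group_add \<Rightarrow> 'c::ab_group_add"
  assumes fin: "finite G" and cl: "\<And>x y. x \<in> G \<Longrightarrow> y \<in> G \<Longrightarrow> x - y \<in> G"
    and lin: "\<And>x y. x \<in> G \<Longrightarrow> y \<in> G \<Longrightarrow> \<phi> (x - y) = \<phi> x - \<phi> y"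
  shows "card G = card (\<phi> ` G) * card {x\<in>G. \<phi> x = 0}"
proof -
  have "card G = (\<Sum>b\<in>\<phi> ` G. card {a\<in>G. \<phi> a = b})"
  proof -
    have "G = (\<Union>b\<in>\<phi> ` G. {a\<in>G. \<phi> a = b})" by auto
    then have "card G = card (\<Union>b\<in>\<phi> ` G. {a\<in>G. \<phi> a = b})" by simp
    also have "\<dots> = (\<Sum>b\<in>\<phi> ` G. card {a\<in>G. \<phi> a = b})"
      by (rule card_UN_disjoint) (use fin in auto)
    finally show ?thesis .
  qed
  also have "\<dots> = (\<Sum>b\<in>\<phi> ` G. card {x\<in>G. \<phi> x = 0})"
  proof (rule sum.cong[OF refl])
    fix b assume "b \<in> \<phi> ` G"
    then obtain a0 where a0: "a0 \<in> G" "\<phi> a0 = b" by blast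
    show "card {a\<in>G. \<phi> a = b} = card {x\<in>G. \<phi> x = 0}"
    proof (rule bij_betw_same_card[of "\<lambda>a. a0 - a"], rule bij_betw_byWitness[of _ "\<lambda>z. a0 - z"])
      show "\<forall>a\<in>{a \<in> G. \<phi> a = b}. a0 - (a0 - a) = a" by simp
      show "\<forall>a'\<in>{x \<in> G. \<phi> x = 0}. a0 - (a0 - a') = a'" by simp
      show "(-) a0 ` {a \<in> G. \<phi> a = b} \<subseteq> {x \<in> G. \<phi> x = 0}"
        using a0 cl lin by auto
      show "(-) a0 ` {x \<in> G. \<phi> x = 0} \<subseteq> {a \<in> G. \<phi> a = b}"
        using a0 cl lin by auto
    qed
  qed
  also have "\<dots> = card (\<phi> ` G) * card {x\<in>G. \<phi> x = 0}" by simp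
  finally show ?thesis .
qed


context
  fixes q m :: nat
  assumes pp: "prime_power q"
    and cardK: "card (UNIV :: 'a::{finite,field} set) = q ^ m"
    and m1: "1 \<le> m"
begin

lemma q2: "2 \<le> q"
proof -
  obtain p e where "prime p" "e \<ge> 1" "q = p ^ e" using pp unfolding prime_power_def by blast
  then show ?thesis
  proof -
    have "p \<ge> 2" using \<open>prime p\<close> prime_ge_2_nat by blast
    have "p ^ 1 \<le> p ^ e" using \<open>e \<ge> 1\<close> \<open>p \<ge> 2\<close> by (intro power_increasing) auto
    then show ?thesis using \<open>p \<ge> 2\<close> \<open>q = p ^ e\<close> by simp
  qed
qed

lemma frob_add: "((x::'a) + y) ^ (q ^ j) = x ^ (q ^ j) + y ^ (q ^ j)"
proof -
  obtain p e where pe: "prime p" "e \<ge> 1" "q = p ^ e" using pp unfolding prime_power_def by blast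
  have "CHAR('a) dvd card (UNIV :: 'a set)" by (rule CHAR_dvd_CARD)
  then have "of_nat (card (UNIV :: 'a set)) = (0::'a)"
    by (simp add: of_nat_eq_0_iff_char_dvd)
  then have "(of_nat p :: 'a) ^ (e * m) = 0" using pe cardK
    by (simp add: power_mult of_nat_power)
  then have p0: "(of_nat p :: 'a) = 0" by simp
  have "q ^ j = p ^ (e * j)" using pe by (simp add: power_mult)
  then show ?thesis using frob_prime_pow[OF pe(1) p0] by simp
qed


lemma q_pos: "0 < q" using q2 by simp

lemma frob_sum: "finite I \<Longrightarrow> (\<Sum>i\<in>I. (f i::'a)) ^ (q ^ j) = (\<Sum>i\<in>I. f i ^ (q ^ j))"
  by (induction I rule: finite_induct) (simp_all add: frob_add zero_power q_pos)

lemma frob_neg: "(- (x::'a)) ^ (q ^ j) = - (x ^ (q ^ j))"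
proof -
  have "(- x) ^ (q ^ j) + x ^ (q ^ j) = 0"
    using frob_add[of "-x" x j] q2 by (simp add: zero_power)
  then show ?thesis by (simp add: eq_neg_iff_add_eq_0)
qed

lemma frob_diff: "((x::'a) - y) ^ (q ^ j) = x ^ (q ^ j) - y ^ (q ^ j)"
  using frob_add[of x "-y" j] frob_neg[of y j] by simp

lemma Fq_pow: "(x::'a) \<in> Fq q \<Longrightarrow> x ^ (q ^ j) = x"
proof (induction j)
  case (Suc j)
  have "x ^ (q ^ Suc j) = (x ^ (q ^ j)) ^ q" by (metis power_Suc2 power_mult)
  then show ?case using Suc by (simp add: Fq_def)
qed simp

lemma Fq_0: "(0::'a) \<in> Fq q" using q2 by (simp add: Fq_def zero_power)
lemma Fq_1: "(1::'a) \<in> Fq q" by (simp add: Fq_def)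
lemma Fq_add: "(x::'a) \<in> Fq q \<Longrightarrow> y \<in> Fq q \<Longrightarrow> x + y \<in> Fq q"
  using frob_add[of x y 1] by (simp add: Fq_def)
lemma Fq_neg: "(x::'a) \<in> Fq q \<Longrightarrow> - x \<in> Fq q"
  using frob_neg[of x 1] by (simp add: Fq_def)
lemma Fq_diff: "(x::'a) \<in> Fq q \<Longrightarrow> y \<in> Fq q \<Longrightarrow> x - y \<in> Fq q"
  using frob_diff[of x y 1] by (simp add: Fq_def)
lemma Fq_mult: "(x::'a) \<in> Fq q \<Longrightarrow> y \<in> Fq q \<Longrightarrow> x * y \<in> Fq q"
  by (simp add: Fq_def power_mult_distrib)
lemma Fq_inv: "(x::'a) \<in> Fq q \<Longrightarrow> inverse x \<in> Fq q"
  by (simp add: Fq_def power_inverse)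
lemma Fq_divide: "(x::'a) \<in> Fq q \<Longrightarrow> y \<in> Fq q \<Longrightarrow> x / y \<in> Fq q"
  by (simp add: Fq_def power_divide)

lemma fermat: "(x::'a) ^ (q ^ m) = x"
proof (cases "x = 0")
  case True then show ?thesis using q2 by (simp add: zero_power)
next
  case False
  let ?N = "UNIV - {0::'a}"
  have fin: "finite ?N" by simp
  have "(\<Prod>y\<in>?N. x * y) = (\<Prod>y\<in>?N. y)"
  proof (rule prod.reindex_bij_witness[of _ "\<lambda>y. y / x" "\<lambda>y. x * y"])
  qed (use False in auto)
  then have "x ^ card ?N * (\<Prod>y\<in>?N. y) = 1 * (\<Prod>y\<in>?N. y)"
    by (simp add: prod.distrib)
  moreover have "(\<Prod>y\<in>?N. y) \<noteq> 0" using fin by (simp add: prod_zero_iff)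
  ultimately have "x ^ card ?N = 1" by (metis mult_right_cancel)
  moreover have "card ?N + 1 = q ^ m"
  proof -
    have "card (UNIV::'a set) > 0" by (simp add: card_gt_0_iff)
    then show ?thesis using cardK card_Diff_singleton[of "0::'a" UNIV] by simp
  qed
  ultimately show ?thesis by (metis power_Suc2 Suc_eq_plus1 mult_1)
qed

definition lin :: "(nat \<Rightarrow> 'a) \<Rightarrow> nat \<Rightarrow> 'a \<Rightarrow> 'a" where
  "lin c D x = (\<Sum>j<D. c j * x ^ (q ^ j))"

lemma lin_roots:
  assumes "j0 < D" "c j0 \<noteq> 0"
  shows "card {x. lin c D x = 0} \<le> q ^ (D - 1)"
proof -
  define P where "P = (\<Sum>j<D. monom (c j) (q ^ j))"
  have ev: "poly P x = lin c D x" for x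
    by (simp add: P_def lin_def poly_sum poly_monom)
  have inj: "inj (\<lambda>j. q ^ j)" using q2 by (auto simp: inj_def)
  have "coeff P (q ^ j0) = (\<Sum>j<D. if q ^ j = q ^ j0 then c j else 0)"
    by (simp add: P_def coeff_sum)
  also have "\<dots> = (\<Sum>j\<in>{j0}. c j)"
    by (rule sum.mono_neutral_cong_right) (use assms inj in \<open>auto simp: inj_def\<close>)
  finally have "coeff P (q ^ j0) \<noteq> 0" using assms by simp
  then have P0: "P \<noteq> 0" by auto
  have "degree P \<le> q ^ (D - 1)" unfolding P_def
  proof (rule degree_sum_le)
    fix j assume "j \<in> {..<D}"
    then have "q ^ j \<le> q ^ (D - 1)" using q2 by (intro power_increasing) auto
    then show "degree (monom (c j) (q ^ j)) \<le> q ^ (D - 1)"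
      using degree_monom_le le_trans by blast
  qed auto
  moreover have "card {x. poly P x = 0} \<le> degree P" by (rule card_poly_roots_bound[OF P0])
  ultimately show ?thesis using ev by simp
qed

lemma card_fibres: "finite A \<Longrightarrow> card A = (\<Sum>b\<in>f ` A. card {a\<in>A. f a = b})"
proof -
  assume fA: "finite A"
  have "A = (\<Union>b\<in>f ` A. {a\<in>A. f a = b})" by auto
  then have "card A = card (\<Union>b\<in>f ` A. {a\<in>A. f a = b})" by simp
  also have "\<dots> = (\<Sum>b\<in>f ` A. card {a\<in>A. f a = b})"
    by (rule card_UN_disjoint) (use fA in auto)
  finally show ?thesis .
qed


lemma card_Fq: "card (Fq q :: 'a set) = q"
proof (rule antisym)
  define c :: "nat \<Rightarrow> 'a" where "c = (\<lambda>j. if j = 0 then -1 else 1)"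
  have l2: "lin c 2 x = x ^ q - x" for x :: 'a
    by (simp add: lin_def c_def numeral_2_eq_2)
  have "Fq q \<subseteq> {x::'a. lin c 2 x = 0}"
    unfolding Fq_def using l2 by auto
  moreover have "card {x::'a. lin c 2 x = 0} \<le> q ^ (2 - 1)"
    by (rule lin_roots[of 1]) (auto simp: c_def)
  ultimately show "card (Fq q :: 'a set) \<le> q"
    using card_mono[of "{x::'a. lin c 2 x = 0}" "Fq q"] by simp
next
  define \<phi> :: "'a \<Rightarrow> 'a" where "\<phi> x = x ^ q - x" for x
  have "card (UNIV::'a set) = card (\<phi> ` UNIV) * card {x\<in>UNIV. \<phi> x = 0}"
  proof (rule card_ker_img)
    fix x y :: 'a
    show "\<phi> (x - y) = \<phi> x - \<phi> y" using frob_diff[of x y 1] by (simp add: \<phi>_def)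
  qed auto
  moreover have "{x\<in>UNIV. \<phi> x = 0} = Fq q" by (auto simp: \<phi>_def Fq_def)
  moreover have "card (\<phi> ` UNIV) \<le> q ^ (m - 1)"
  proof -
    have "\<phi> ` UNIV \<subseteq> {x::'a. lin (\<lambda>_. 1) m x = 0}"
    proof safe
      fix y :: 'a
      have "lin (\<lambda>_. 1) m (\<phi> y) = (\<Sum>j<m. (y ^ q - y) ^ (q ^ j))" by (simp add: lin_def \<phi>_def)
      also have "\<dots> = (\<Sum>j<m. y ^ (q ^ Suc j) - y ^ (q ^ j))"
      proof (rule sum.cong[OF refl])
        fix j
        have "(y ^ q) ^ (q ^ j) = y ^ (q ^ Suc j)" by (simp only: power_mult[symmetric] power_Suc)
        then show "(y ^ q - y) ^ (q ^ j) = y ^ (q ^ Suc j) - y ^ (q ^ j)" by (simp add: frob_diff)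
      qed
      also have "\<dots> = y ^ (q ^ m) - y ^ (q ^ 0)" by (rule sum_lessThan_telescope)
      also have "\<dots> = 0" by (simp add: fermat)
      finally show "lin (\<lambda>_. 1) m (\<phi> y) = 0" .
    qed
    moreover have "card {x::'a. lin (\<lambda>_. 1) m x = 0} \<le> q ^ (m - 1)"
      by (rule lin_roots[of 0]) (use m1 in auto)
    ultimately show ?thesis using card_mono[of "{x::'a. lin (\<lambda>_. 1) m x = 0}" "\<phi> ` UNIV"] by simp
  qed
  ultimately have "q ^ m \<le> q ^ (m - 1) * card (Fq q :: 'a set)"
    using cardK mult_le_mono1[of "card (\<phi> ` UNIV)" "q ^ (m - 1)" "card (Fq q :: 'a set)"] by simp
  moreover have "q ^ m = q ^ (m - 1) * q" using m1 power_Suc2[of q "m - 1"] by simp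
  ultimately show "q \<le> card (Fq q :: 'a set)" using q_pos by simp
qed

definition span :: "nat set \<Rightarrow> (nat \<Rightarrow> 'a) \<Rightarrow> 'a set" where
  "span I w = {\<Sum>i\<in>I. c i * w i | c. \<forall>i\<in>I. c i \<in> Fq q}"

lemma span_eq_image: "span I w = (\<lambda>c. \<Sum>i\<in>I. c i * w i) ` (\<Pi>\<^sub>E i\<in>I. Fq q)"
proof safe
  fix x assume "x \<in> span I w"
  then obtain c where c: "x = (\<Sum>i\<in>I. c i * w i)" "\<forall>i\<in>I. c i \<in> Fq q" by (auto simp: span_def)
  then have "x = (\<Sum>i\<in>I. restrict c I i * w i)" by simp
  then show "x \<in> (\<lambda>c. \<Sum>i\<in>I. c i * w i) ` (\<Pi>\<^sub>E i\<in>I. Fq q)" using c(2)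
    by (intro image_eqI[of _ _ "restrict c I"]) auto
next
  fix c :: "nat \<Rightarrow> 'a" assume "c \<in> (\<Pi>\<^sub>E i\<in>I. Fq q)"
  then show "(\<Sum>i\<in>I. c i * w i) \<in> span I w"
    unfolding span_def PiE_iff by blast
qed

lemma card_span_le: "finite I \<Longrightarrow> card (span I w) \<le> q ^ card I"
proof -
  assume fI: "finite I"
  have "card (span I w) \<le> card (\<Pi>\<^sub>E i\<in>I. (Fq q :: 'a set))"
    unfolding span_eq_image by (rule card_image_le) (use fI in \<open>simp add: finite_PiE\<close>)
  also have "\<dots> = q ^ card I" using fI by (simp add: card_PiE card_Fq)
  finally show ?thesis .
qed

lemma card_span_indep:
  assumes "finite I" "lin_indep_Fq q I w"
  shows "card (span I w) = q ^ card I"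
proof -
  have "inj_on (\<lambda>c. \<Sum>i\<in>I. c i * w i) (\<Pi>\<^sub>E i\<in>I. Fq q)"
  proof (rule inj_onI)
    fix c c' assume c: "c \<in> (\<Pi>\<^sub>E i\<in>I. Fq q)" "c' \<in> (\<Pi>\<^sub>E i\<in>I. Fq q)"
      and eq: "(\<Sum>i\<in>I. c i * w i) = (\<Sum>i\<in>I. c' i * w i)"
    have "(\<Sum>i\<in>I. (c i - c' i) * w i) = 0" using eq by (simp add: algebra_simps sum_subtractf)
    moreover have "\<forall>i\<in>I. c i - c' i \<in> Fq q" using c by (auto intro: Fq_diff)
    ultimately have "\<forall>i\<in>I. c i - c' i = 0" using assms(2) unfolding lin_indep_Fq_def
      by (elim allE[where x="\<lambda>i. c i - c' i"]) auto
    then show "c = c'" using c by (auto intro: PiE_ext)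
  qed
  then show ?thesis unfolding span_eq_image using assms(1)
    by (simp add: card_image card_PiE card_Fq)
qed

lemma span_cong: "(\<And>i. i \<in> I \<Longrightarrow> w i = w' i) \<Longrightarrow> span I w = span I w'"
  unfolding span_def by (metis (no_types, lifting) sum.cong)

lemma indep_cong: "(\<And>i. i \<in> I \<Longrightarrow> w i = w' i) \<Longrightarrow> lin_indep_Fq q I w = lin_indep_Fq q I w'"
  unfolding lin_indep_Fq_def by (metis (no_types, lifting) sum.cong)

lemma span_memI: "(\<And>i. i \<in> I \<Longrightarrow> c i \<in> Fq q) \<Longrightarrow> x = (\<Sum>i\<in>I. c i * w i) \<Longrightarrow> x \<in> span I w"
  unfolding span_def by blast

definition subsp :: "'a set \<Rightarrow> bool" where
  "subsp S \<longleftrightarrow> 0 \<in> S \<and> (\<forall>x\<in>S. \<forall>y\<in>S. x + y \<in> S) \<and> (\<forall>a\<in>Fq q. \<forall>x\<in>S. a * x \<in> S)"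

lemma subsp_sum:
  assumes "subsp S" "finite J" "\<And>j. j \<in> J \<Longrightarrow> a j \<in> Fq q" "\<And>j. j \<in> J \<Longrightarrow> u j \<in> S"
  shows "(\<Sum>j\<in>J. a j * u j) \<in> S"
  using assms(2-4)
proof (induction J rule: finite_induct)
  case empty then show ?case using assms(1) by (simp add: subsp_def)
next
  case (insert x F)
  then show ?case using assms(1) unfolding subsp_def by simp
qed

lemma subsp_diff: "subsp S \<Longrightarrow> x \<in> S \<Longrightarrow> y \<in> S \<Longrightarrow> x - y \<in> S"
proof -
  assume S: "subsp S" "x \<in> S" "y \<in> S"
  have "(-1) * y \<in> S" using S Fq_neg[OF Fq_1] unfolding subsp_def by blast
  then have "x + (-1) * y \<in> S" using S unfolding subsp_def by blast
  then show ?thesis by simp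
qed

lemma subsp_span: "subsp (span I w)"
  unfolding subsp_def
proof (intro conjI ballI)
  show "0 \<in> span I w" unfolding span_def using Fq_0
    by (intro CollectI exI[of _ "\<lambda>_. 0"]) auto
next
  fix x y assume "x \<in> span I w" "y \<in> span I w"
  then obtain c c' where c: "x = (\<Sum>i\<in>I. c i * w i)" "\<forall>i\<in>I. c i \<in> Fq q"
      "y = (\<Sum>i\<in>I. c' i * w i)" "\<forall>i\<in>I. c' i \<in> Fq q" by (auto simp: span_def)
  then have "x + y = (\<Sum>i\<in>I. (c i + c' i) * w i)" by (simp add: sum.distrib distrib_right)
  moreover have "\<forall>i\<in>I. c i + c' i \<in> Fq q" using c by (auto intro: Fq_add)
  ultimately show "x + y \<in> span I w" by (intro span_memI[where c="\<lambda>i. c i + c' i"]) auto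
next
  fix a :: 'a and x assume "a \<in> Fq q" "x \<in> span I w"
  then obtain c where c: "x = (\<Sum>i\<in>I. c i * w i)" "\<forall>i\<in>I. c i \<in> Fq q" by (auto simp: span_def)
  then have "a * x = (\<Sum>i\<in>I. (a * c i) * w i)" by (simp add: sum_distrib_left mult.assoc)
  moreover have "\<forall>i\<in>I. a * c i \<in> Fq q" using c \<open>a \<in> Fq q\<close> by (auto intro: Fq_mult)
  ultimately show "a * x \<in> span I w" by (intro span_memI[where c="\<lambda>i. a * c i"]) auto
qed

lemma span_base: "finite I \<Longrightarrow> i \<in> I \<Longrightarrow> w i \<in> span I w"
proof -
  assume "finite I" "i \<in> I"
  have "(\<Sum>j\<in>I. (if j = i then 1 else 0) * w j) = (\<Sum>j\<in>I. if j = i then w j else 0)"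
    by (rule sum.cong) auto
  then have "w i = (\<Sum>j\<in>I. (if j = i then 1 else 0) * w j)"
    using \<open>finite I\<close> \<open>i \<in> I\<close> by (simp add: sum.delta')
  moreover have "\<forall>j\<in>I. (if j = i then 1 else 0) \<in> (Fq q :: 'a set)" using Fq_0 Fq_1 by auto
  ultimately show ?thesis by (intro span_memI[where c="\<lambda>j. if j = i then 1 else 0"]) auto
qed

lemma span_mono: "finite J \<Longrightarrow> I \<subseteq> J \<Longrightarrow> span I w \<subseteq> span J w"
proof
  fix x assume fJ: "finite J" and IJ: "I \<subseteq> J" and "x \<in> span I w"
  then obtain c where c: "x = (\<Sum>i\<in>I. c i * w i)" "\<forall>i\<in>I. c i \<in> Fq q" by (auto simp: span_def)
  have "x = (\<Sum>i\<in>J. (if i \<in> I then c i else 0) * w i)"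
    unfolding c(1) by (rule sum.mono_neutral_cong_left) (use fJ IJ in auto)
  moreover have "\<forall>i\<in>J. (if i \<in> I then c i else 0) \<in> Fq q" using c Fq_0 by auto
  ultimately show "x \<in> span J w" by (intro span_memI[where c="\<lambda>i. if i \<in> I then c i else 0"]) auto
qed

lemma indep_insert:
  assumes fI: "finite I" and iI: "i \<notin> I" and ind: "lin_indep_Fq q I w" and ns: "w i \<notin> span I w"
  shows "lin_indep_Fq q (insert i I) w"
  unfolding lin_indep_Fq_def
proof (intro allI impI)
  fix c assume cF: "\<forall>j\<in>insert i I. c j \<in> Fq q" and s0: "(\<Sum>j\<in>insert i I. c j * w j) = 0"
  then have s1: "c i * w i + (\<Sum>j\<in>I. c j * w j) = 0" using fI iI by simp
  have ci: "c i = 0"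
  proof (rule ccontr)
    assume nz: "c i \<noteq> 0"
    have "w i = (\<Sum>j\<in>I. (- (c j / c i)) * w j)"
    proof -
      have "c i * w i = - (\<Sum>j\<in>I. c j * w j)" using s1 by (simp add: eq_neg_iff_add_eq_0)
      then have "w i = - (\<Sum>j\<in>I. c j * w j) / c i" using nz by (metis nonzero_mult_div_cancel_left)
      also have "\<dots> = (\<Sum>j\<in>I. - (c j * w j) / c i)" by (simp add: sum_divide_distrib sum_negf)
      also have "\<dots> = (\<Sum>j\<in>I. (- (c j / c i)) * w j)"
        by (rule sum.cong[OF refl]) simp
      finally show ?thesis .
    qed
    moreover have "\<forall>j\<in>I. - (c j / c i) \<in> Fq q" using cF by (auto intro: Fq_neg Fq_divide)
    ultimately have "w i \<in> span I w" by (intro span_memI[where c="\<lambda>j. - (c j / c i)"]) auto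
    then show False using ns by blast
  qed
  then have "(\<Sum>j\<in>I. c j * w j) = 0" using s1 by simp
  then have "\<forall>j\<in>I. c j = 0" using ind[unfolded lin_indep_Fq_def, rule_format, of c] cF by blast
  then show "\<forall>j\<in>insert i I. c j = 0" using ci by simp
qed

lemma indep_insertD:
  assumes fI: "finite I" and iI: "i \<notin> I" and ind: "lin_indep_Fq q (insert i I) w"
  shows "lin_indep_Fq q I w" "w i \<notin> span I w"
proof -
  show "lin_indep_Fq q I w" unfolding lin_indep_Fq_def
  proof (intro allI impI)
    fix c assume cF: "\<forall>j\<in>I. c j \<in> Fq q" and s0: "(\<Sum>j\<in>I. c j * w j) = 0"
    have e1: "(\<Sum>j\<in>insert i I. (c(i:=0)) j * w j) = (c(i:=0)) i * w i + (\<Sum>j\<in>I. (c(i:=0)) j * w j)"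
      by (rule sum.insert[OF fI iI])
    have e2: "(\<Sum>j\<in>I. (c(i:=0)) j * w j) = (\<Sum>j\<in>I. c j * w j)"
      by (rule sum.cong) (use iI in auto)
    have "(\<Sum>j\<in>insert i I. (c(i:=0)) j * w j) = (\<Sum>j\<in>I. c j * w j)"
      using e1 e2 by simp
    moreover have "\<forall>j\<in>insert i I. (c(i:=0)) j \<in> Fq q" using cF Fq_0 by auto
    moreover have "(\<forall>j\<in>insert i I. (c(i:=0)) j \<in> Fq q) \<longrightarrow> (\<Sum>j\<in>insert i I. (c(i:=0)) j * w j) = 0
        \<longrightarrow> (\<forall>j\<in>insert i I. (c(i:=0)) j = 0)" using ind unfolding lin_indep_Fq_def by (rule spec)
    ultimately have "\<forall>j\<in>insert i I. (c(i:=0)) j = 0" using s0 by simp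
    show "\<forall>j\<in>I. c j = 0"
    proof
      fix j assume jI: "j \<in> I"
      then have "j \<noteq> i" using iI by auto
      then have "c j = (c(i:=0)) j" by simp
      also have "\<dots> = 0" using \<open>\<forall>j\<in>insert i I. (c(i:=0)) j = 0\<close> jI by blast
      finally show "c j = 0" .
    qed
  qed
  show "w i \<notin> span I w"
  proof
    assume "w i \<in> span I w"
    then obtain c where c: "w i = (\<Sum>j\<in>I. c j * w j)" "\<forall>j\<in>I. c j \<in> Fq q" by (auto simp: span_def)
    have e1: "(\<Sum>j\<in>insert i I. (c(i:=-1)) j * w j) = (c(i:=-1)) i * w i + (\<Sum>j\<in>I. (c(i:=-1)) j * w j)"
      by (rule sum.insert[OF fI iI])
    have e2: "(\<Sum>j\<in>I. (c(i:=-1)) j * w j) = (\<Sum>j\<in>I. c j * w j)"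
      by (rule sum.cong) (use iI in auto)
    have "(\<Sum>j\<in>insert i I. (c(i:=-1)) j * w j) = - w i + (\<Sum>j\<in>I. c j * w j)"
      using e1 e2 by simp
    also have "\<dots> = 0" using c by simp
    finally have "(\<Sum>j\<in>insert i I. (c(i:=-1)) j * w j) = 0" .
    moreover have "\<forall>j\<in>insert i I. (c(i:=-1)) j \<in> Fq q" using c Fq_neg[OF Fq_1] by auto
    moreover have "(\<forall>j\<in>insert i I. (c(i:=-1)) j \<in> Fq q) \<longrightarrow> (\<Sum>j\<in>insert i I. (c(i:=-1)) j * w j) = 0
        \<longrightarrow> (\<forall>j\<in>insert i I. (c(i:=-1)) j = 0)" using ind unfolding lin_indep_Fq_def by (rule spec)
    ultimately have "\<forall>j\<in>insert i I. (c(i:=-1)) j = 0" by blast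
    then have "(c(i:=-1)) i = 0" by blast
    then show False by simp
  qed
qed

lemma rank_span: "card (span {..<n} u) = q ^ rk q n u"
proof -
  define R where "R = {card I | I. I \<subseteq> {..<n} \<and> lin_indep_Fq q I u}"
  have cI: "\<And>I. I \<subseteq> {..<n} \<Longrightarrow> card I \<le> n" by (metis card_lessThan card_mono finite_lessThan)
  have "R \<subseteq> {..n}" unfolding R_def using cI by auto
  then have finR: "finite R" using finite_subset by blast
  have "0 \<in> R" unfolding R_def lin_indep_Fq_def by (intro CollectI exI[of _ "{}"]) auto
  then have "Max R \<in> R" using finR by (intro Max_in) auto
  then obtain I0 where I0: "I0 \<subseteq> {..<n}" "lin_indep_Fq q I0 u" "card I0 = rk q n u"
    unfolding R_def rk_def by auto
  have fI0: "finite I0" using I0(1) finite_subset by blast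
  have all: "u j \<in> span I0 u" if "j < n" for j
  proof (rule ccontr)
    assume ns: "u j \<notin> span I0 u"
    then have jI: "j \<notin> I0" using span_base[OF fI0] by blast
    then have "lin_indep_Fq q (insert j I0) u" using indep_insert[OF fI0 jI I0(2) ns] by simp
    then have "card (insert j I0) \<in> R" unfolding R_def using I0(1) that by blast
    then have "card (insert j I0) \<le> rk q n u" unfolding rk_def R_def[symmetric] using finR by simp
    then show False using I0(3) fI0 jI by simp
  qed
  have "span {..<n} u \<subseteq> span I0 u"
  proof
    fix x assume "x \<in> span {..<n} u"
    then obtain c where c: "x = (\<Sum>j<n. c j * u j)" "\<forall>j<n. c j \<in> Fq q" by (auto simp: span_def)
    show "x \<in> span I0 u" unfolding c(1) by (rule subsp_sum[OF subsp_span]) (use c all in auto)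
  qed
  moreover have "span I0 u \<subseteq> span {..<n} u" by (rule span_mono) (use I0 in auto)
  ultimately have "span {..<n} u = span I0 u" by blast
  then show ?thesis using card_span_indep[OF fI0 I0(2)] I0(3) by simp
qed

definition T :: "'a set \<Rightarrow> nat \<Rightarrow> (nat \<Rightarrow> 'a) set" where
  "T S s = {w \<in> (\<Pi>\<^sub>E i\<in>{..<s}. S). lin_indep_Fq q {..<s} w}"

lemma span_subsp:
  fixes S :: "'a set"
  assumes "subsp S" "\<And>i. i \<in> I \<Longrightarrow> w i \<in> S" "finite I"
  shows "span I w \<subseteq> S"
proof
  fix x assume "x \<in> span I w"
  then obtain c where c: "x = (\<Sum>i\<in>I. c i * w i)" "\<forall>i\<in>I. c i \<in> Fq q" by (auto simp: span_def)
  show "x \<in> S" unfolding c(1) by (rule subsp_sum[OF assms(1) assms(3)]) (use c assms(2) in auto)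
qed

lemma T_Suc:
  "T S (Suc s) = (\<lambda>(w, v). w(s := v)) ` (SIGMA w:T S s. S - span {..<s} w)"
proof (intro Set.set_eqI iffI)
  fix u assume u: "u \<in> T S (Suc s)"
  define w where "w = u(s := undefined)"
  have uw: "\<And>i. i \<in> {..<s} \<Longrightarrow> u i = w i" by (auto simp: w_def)
  have ins: "{..<Suc s} = insert s {..<s}" by auto
  have indu: "lin_indep_Fq q (insert s {..<s}) u" using u ins by (simp add: T_def)
  have "w \<in> (\<Pi>\<^sub>E i\<in>{..<s}. S)" using u by (auto simp: T_def w_def PiE_def Pi_def extensional_def)
  moreover have "lin_indep_Fq q {..<s} w"
    using indep_insertD(1)[OF finite_lessThan _ indu] indep_cong[of "{..<s}" u w, OF uw] by simp
  moreover have "u s \<in> S" using u by (auto simp: T_def PiE_def Pi_def)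
  moreover have "u s \<notin> span {..<s} w"
    using indep_insertD(2)[OF finite_lessThan _ indu] span_cong[of "{..<s}" u w, OF uw] by simp
  moreover have "u = w(s := u s)" by (auto simp: w_def)
  ultimately show "u \<in> (\<lambda>(w, v). w(s := v)) ` (SIGMA w:T S s. S - span {..<s} w)"
    unfolding T_def by (intro image_eqI[of _ _ "(w, u s)"]) auto
next
  fix u assume "u \<in> (\<lambda>(w, v). w(s := v)) ` (SIGMA w:T S s. S - span {..<s} w)"
  then obtain w v where wv: "w \<in> T S s" "v \<in> S" "v \<notin> span {..<s} w" "u = w(s := v)" by auto
  have uw: "\<And>i. i \<in> {..<s} \<Longrightarrow> u i = w i" using wv(4) by auto
  have ins: "{..<Suc s} = insert s {..<s}" by auto
  have "u \<in> (\<Pi>\<^sub>E i\<in>{..<Suc s}. S)" using wv by (auto simp: T_def PiE_def Pi_def extensional_def)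
  moreover have "lin_indep_Fq q (insert s {..<s}) u"
  proof (rule indep_insert[OF finite_lessThan])
    show "lin_indep_Fq q {..<s} u" using wv(1) indep_cong[of "{..<s}" u w, OF uw] by (simp add: T_def)
    show "u s \<notin> span {..<s} u" using wv span_cong[of "{..<s}" u w, OF uw] by simp
  qed simp
  ultimately show "u \<in> T S (Suc s)" unfolding T_def using ins by simp
qed

lemma card_T:
  assumes S: "subsp S" "finite S"
  shows "card (T S s) = (\<Prod>i<s. card S - q ^ i)"
proof (induction s)
  case 0
  have "T S 0 = {\<lambda>_. undefined}" by (auto simp: T_def lin_indep_Fq_def)
  then show ?case by simp
next
  case (Suc s)
  have fT: "finite (T S s)"
    by (rule finite_subset[of _ "\<Pi>\<^sub>E i\<in>{..<s}. S"]) (use S in \<open>auto simp: T_def intro: finite_PiE\<close>)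
  have inj: "inj_on (\<lambda>(w, v). w(s := v)) (SIGMA w:T S s. S - span {..<s} w)"
  proof (rule inj_onI, clarify)
    fix w v w' v'
    assume w: "w \<in> T S s" "w' \<in> T S s" and eq: "w(s := v) = w'(s := v')"
    have "v = v'" using fun_cong[OF eq, of s] by simp
    moreover have "w = w'"
    proof
      fix j
      show "w j = w' j"
      proof (cases "j = s")
        case True
        then show ?thesis using w by (auto simp: T_def PiE_def extensional_def)
      next
        case False
        then show ?thesis using fun_cong[OF eq, of j] by simp
      qed
    qed
    ultimately show "w = w' \<and> v = v'" by simp
  qed
  have cd: "card (S - span {..<s} w) = card S - q ^ s" if "w \<in> T S s" for w
  proof -
    have sub: "span {..<s} w \<subseteq> S"
      by (rule span_subsp[OF S(1)]) (use that in \<open>auto simp: T_def PiE_def Pi_def\<close>)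
    have "card (span {..<s} w) = q ^ s"
      using card_span_indep[OF finite_lessThan] that by (simp add: T_def)
    then show ?thesis using card_Diff_subset[OF finite_subset[OF sub S(2)] sub] by simp
  qed
  have "card (T S (Suc s)) = card (SIGMA w:T S s. S - span {..<s} w)"
    unfolding T_Suc by (rule card_image[OF inj])
  also have "\<dots> = (\<Sum>w\<in>T S s. card (S - span {..<s} w))"
    by (rule card_SigmaI) (use fT S in auto)
  also have "\<dots> = (\<Sum>w\<in>T S s. card S - q ^ s)" by (rule sum.cong) (use cd in auto)
  also have "\<dots> = card (T S s) * (card S - q ^ s)" by simp
  finally show ?case using Suc by simp
qed

lemma lin_add: "lin c D (x + y) = lin c D x + lin c D (y::'a)"
  by (simp add: lin_def frob_add distrib_left sum.distrib)

lemma lin_zero: "lin c D (0::'a) = 0"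
  using q_pos by (simp add: lin_def zero_power)

lemma lin_smult: "a \<in> Fq q \<Longrightarrow> lin c D (a * x) = a * lin c D (x::'a)"
  by (simp add: lin_def power_mult_distrib Fq_pow sum_distrib_left mult.left_commute)

lemma lin_neg: "lin c D (- x) = - lin c D (x::'a)"
  by (simp add: lin_def frob_neg sum_negf)

lemma lin_diff: "lin c D (x - y) = lin c D x - lin c D (y::'a)"
  by (simp add: lin_def frob_diff right_diff_distrib sum_subtractf)

lemma lin_comb:
  assumes "finite I" "\<And>i. i \<in> I \<Longrightarrow> a i \<in> Fq q"
  shows "lin c D (\<Sum>i\<in>I. a i * w i) = (\<Sum>i\<in>I. a i * lin c D (w i :: 'a))"
  using assms by (induction I rule: finite_induct) (auto simp: lin_zero lin_add lin_smult)

lemma subsp_ker: "subsp {x::'a. lin c D x = 0}"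
  unfolding subsp_def by (auto simp: lin_zero lin_add lin_smult)

lemma lin_image_span:
  "finite I \<Longrightarrow> lin c D ` span I w = span I (\<lambda>i. lin c D (w i :: 'a))"
proof (intro Set.set_eqI iffI)
  fix y assume fI: "finite I" and "y \<in> lin c D ` span I w"
  then obtain a where a: "y = lin c D (\<Sum>i\<in>I. a i * w i)" "\<forall>i\<in>I. a i \<in> Fq q"
    by (auto simp: span_def)
  then show "y \<in> span I (\<lambda>i. lin c D (w i))"
    using lin_comb[OF fI, of a] by (intro span_memI[where c=a]) auto
next
  fix y assume fI: "finite I" and "y \<in> span I (\<lambda>i. lin c D (w i))"
  then obtain a where a: "y = (\<Sum>i\<in>I. a i * lin c D (w i))" "\<forall>i\<in>I. a i \<in> Fq q"
    by (auto simp: span_def)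
  then have "y = lin c D (\<Sum>i\<in>I. a i * w i)" using lin_comb[OF fI, of a] by auto
  moreover have "(\<Sum>i\<in>I. a i * w i) \<in> span I w" using a by (intro span_memI[where c=a]) auto
  ultimately show "y \<in> lin c D ` span I w" by blast
qed


lemma span_neg: "span I (\<lambda>i. - u i) = span I (u :: nat \<Rightarrow> 'a)"
proof (intro Set.set_eqI iffI)
  fix x assume "x \<in> span I (\<lambda>i. - u i)"
  then obtain c where c: "x = (\<Sum>i\<in>I. c i * - u i)" "\<forall>i\<in>I. c i \<in> Fq q" by (auto simp: span_def)
  then show "x \<in> span I u" by (intro span_memI[where c="\<lambda>i. - c i"]) (auto intro: Fq_neg)
next
  fix x assume "x \<in> span I u"
  then obtain c where c: "x = (\<Sum>i\<in>I. c i * u i)" "\<forall>i\<in>I. c i \<in> Fq q" by (auto simp: span_def)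
  then show "x \<in> span I (\<lambda>i. - u i)" by (intro span_memI[where c="\<lambda>i. - c i"]) (auto intro: Fq_neg)
qed

lemma lin_sub_coeff: "lin (\<lambda>j. c j - c' j) D x = lin c D x - lin c' D (x::'a)"
  by (simp add: lin_def left_diff_distrib sum_subtractf)

lemma lin_vanish_span:
  assumes "finite I" "\<And>i. i \<in> I \<Longrightarrow> lin c D (w i) = (0::'a)" "x \<in> span I w"
  shows "lin c D x = 0"
proof -
  obtain a where a: "x = (\<Sum>i\<in>I. a i * w i)" "\<forall>i\<in>I. a i \<in> Fq q" using assms(3) by (auto simp: span_def)
  show ?thesis unfolding a(1) using lin_comb[OF assms(1), of a] a(2) assms(2) by simp
qed

text \<open>A linearized polynomial of q-degree < D vanishing on q^D points is zero.\<close>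
lemma lin_zero_coeffs:
  assumes "finite I" "lin_indep_Fq q I w" "card I \<ge> D" "\<And>i. i \<in> I \<Longrightarrow> lin c D (w i) = (0::'a)"
    "j < D"
  shows "c j = 0"
proof (rule ccontr)
  assume cj: "c j \<noteq> 0"
  have "span I w \<subseteq> {x. lin c D x = 0}"
  proof
    fix x assume "x \<in> span I w"
    then show "x \<in> {x. lin c D x = 0}" using lin_vanish_span[of I c D w x] assms(1,4) by auto
  qed
  then have "card (span I w) \<le> card {x. lin c D x = 0}" by (intro card_mono) auto
  also have "\<dots> \<le> q ^ (D - 1)" by (rule lin_roots[of j D c, OF assms(5) cj])
  finally have "q ^ card I \<le> q ^ (D - 1)" using card_span_indep[OF assms(1,2)] by simp
  then have "card I \<le> D - 1" using q2 by (simp add: power_le_imp_le_exp)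
  then show False using assms(3,5) by simp
qed

definition P :: "nat \<Rightarrow> (nat \<Rightarrow> 'a) \<Rightarrow> 'a \<Rightarrow> 'a" where
  "P s c x = lin (c(s := 1)) (Suc s) x"

lemma P_expand: "P s c x = lin c s x + x ^ (q ^ s)"
proof -
  have "lin (c(s := 1)) s x = lin c s x" unfolding lin_def by (rule sum.cong) auto
  then show ?thesis unfolding P_def by (simp add: lin_def)
qed

lemma P_roots: "card {x. P s c x = 0} \<le> q ^ s"
  unfolding P_def using lin_roots[of s "Suc s" "c(s:=1)"] by simp

lemma subsp_P: "subsp {x. P s c x = 0}"
  unfolding P_def by (rule subsp_ker)

lemma words_finite: "finite (words n :: (nat \<Rightarrow> 'a) set)"
proof -
  have "words n \<subseteq> (\<lambda>f i. if i < n then f i else 0) ` (\<Pi>\<^sub>E i\<in>{..<n}. (UNIV :: 'a set))"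
  proof
    fix y :: "nat \<Rightarrow> 'a" assume y: "y \<in> words n"
    have "y = (\<lambda>i. if i < n then restrict y {..<n} i else 0)"
      using y by (auto simp: words_def fun_eq_iff)
    then show "y \<in> (\<lambda>f i. if i < n then f i else 0) ` (\<Pi>\<^sub>E i\<in>{..<n}. (UNIV :: 'a set))"
      by (intro image_eqI[of _ _ "restrict y {..<n}"]) auto
  qed
  then show ?thesis by (rule finite_subset) (intro finite_imageI finite_PiE, auto)
qed

lemma gauss_ge:
  assumes "r \<le> n"
  shows "real q ^ ((n - r) * r) \<le> gauss_binom q n r"
proof -
  have "real q ^ ((n - r) * r) = (real q ^ (n - r)) ^ r" by (rule power_mult)
  also have "\<dots> = (\<Prod>i<r. real q ^ (n - r))" by simp
  also have "\<dots> \<le> (\<Prod>i<r. (real q ^ n - real q ^ i) / (real q ^ r - real q ^ i))"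
  proof (rule prod_mono, safe)
    fix i assume i: "i < r"
    have q1: "real q \<ge> 1" using q2 by simp
    have pos: "real q ^ r - real q ^ i > 0" using i q2 by (simp add: power_strict_increasing)
    have "real q ^ i \<le> real q ^ (n - r + i)" using q1 by (intro power_increasing) auto
    then have "real q ^ (n - r) * (real q ^ r - real q ^ i) \<le> real q ^ n - real q ^ i"
      using assms by (simp add: right_diff_distrib power_add[symmetric])
    then show "real q ^ (n - r) \<le> (real q ^ n - real q ^ i) / (real q ^ r - real q ^ i)"
      using pos by (simp add: pos_le_divide_eq)
    show "0 \<le> real q ^ (n - r)" by simp
  qed
  finally show ?thesis by (simp add: gauss_binom_def)
qed

lemma exists_P:
  assumes ind: "lin_indep_Fq q {..<s} w"
  shows "\<exists>c \<in> (\<Pi>\<^sub>E j\<in>{..<s}. (UNIV :: 'a set)). \<forall>l<s. P s c (w l) = 0"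
proof -
  define D where "D = (\<Pi>\<^sub>E j\<in>{..<s}. (UNIV :: 'a set))"
  define E where "E c = restrict (\<lambda>l. lin c s (w l)) {..<s}" for c
  have finD: "finite D" unfolding D_def by (intro finite_PiE) auto
  have sub: "E ` D \<subseteq> D" unfolding D_def E_def by (rule image_subsetI) simp
  have inj: "inj_on E D"
  proof (rule inj_onI)
    fix c c' assume c: "c \<in> D" "c' \<in> D" and eq: "E c = E c'"
    have z: "lin (\<lambda>j. c j - c' j) s (w l) = 0" if "l \<in> {..<s}" for l
      using fun_cong[OF eq, of l] that by (simp add: E_def lin_sub_coeff)
    have "c j - c' j = 0" if "j < s" for j
      by (rule lin_zero_coeffs[OF finite_lessThan ind _ z that]) auto
    then show "c = c'" using c unfolding D_def by (intro PiE_ext) auto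
  qed
  have ED: "E ` D = D" by (rule endo_inj_surj[OF finD sub inj])
  have "restrict (\<lambda>l. - (w l ^ (q ^ s))) {..<s} \<in> D" unfolding D_def by simp
  then have "restrict (\<lambda>l. - (w l ^ (q ^ s))) {..<s} \<in> E ` D" using ED by simp
  then obtain c where c: "c \<in> D" "E c = restrict (\<lambda>l. - (w l ^ (q ^ s))) {..<s}"
    by (metis imageE)
  have "P s c (w l) = 0" if "l < s" for l
    using fun_cong[OF c(2), of l] that by (simp add: E_def P_expand)
  then show ?thesis using c(1) unfolding D_def by blast
qed



context
  fixes \<alpha> :: "nat \<Rightarrow> 'a" and n k \<tau> :: nat
  assumes n0: "0 < n" and nm: "n \<le> m" and k0: "0 < k" and kn: "k \<le> n"
    and \<alpha>w: "\<alpha> \<in> words n" and \<alpha>i: "lin_indep_Fq q {..<n} \<alpha>" and \<tau>k: "\<tau> \<le> n - k"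
begin

abbreviation "V \<equiv> span {..<n} \<alpha>"
abbreviation "ss \<equiv> n - \<tau>"

lemma ss_ge: "k \<le> ss" "ss \<le> n" using \<tau>k kn by auto

lemma V_card: "card V = q ^ n"
  using card_span_indep[OF finite_lessThan \<alpha>i] by simp

lemma V_subsp: "subsp V" by (rule subsp_span)

lemma V_fin: "finite V" by simp

definition Cset :: "(nat \<Rightarrow> 'a) set" where
  "Cset = {c \<in> (\<Pi>\<^sub>E j\<in>{..<ss}. (UNIV :: 'a set)). \<exists>w\<in>T V ss. \<forall>l<ss. P ss c (w l) = 0}"

lemma Cset_fin: "finite Cset"
  by (rule finite_subset[of _ "\<Pi>\<^sub>E j\<in>{..<ss}. (UNIV :: 'a set)"]) (auto simp: Cset_def intro: finite_PiE)

lemma card_Cset: "gauss_binom q n ss \<le> real (card Cset)"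
proof -
  define A where "A = T V ss"
  define fib where "fib c = {w \<in> A. \<forall>l<ss. P ss c (w l) = 0}" for c
  have A_sub: "A \<subseteq> (\<Union>c\<in>Cset. fib c)"
  proof
    fix w assume w: "w \<in> A"
    then have "lin_indep_Fq q {..<ss} w" by (simp add: A_def T_def)
    then obtain c where c: "c \<in> (\<Pi>\<^sub>E j\<in>{..<ss}. (UNIV :: 'a set))" "\<forall>l<ss. P ss c (w l) = 0"
      using exists_P by blast
    then have "c \<in> Cset" using w unfolding Cset_def A_def by blast
    then show "w \<in> (\<Union>c\<in>Cset. fib c)" using c w unfolding fib_def by blast
  qed
  have fib_le: "card (fib c) \<le> (\<Prod>i<ss. q ^ ss - q ^ i)" for c
  proof -
    define K where "K = {x::'a. P ss c x = 0}"
    have "fib c \<subseteq> T K ss"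
      unfolding fib_def A_def T_def K_def by (auto simp: PiE_iff)
    moreover have "finite (T K ss)"
      by (rule finite_subset[of _ "\<Pi>\<^sub>E i\<in>{..<ss}. K"]) (auto simp: T_def intro!: finite_PiE)
    ultimately have "card (fib c) \<le> card (T K ss)" by (intro card_mono)
    also have "\<dots> = (\<Prod>i<ss. card K - q ^ i)" unfolding K_def by (rule card_T[OF subsp_P]) simp
    also have "\<dots> \<le> (\<Prod>i<ss. q ^ ss - q ^ i)"
      by (rule prod_mono) (use P_roots[of ss c] in \<open>auto simp: K_def\<close>)
    finally show ?thesis .
  qed
  have finA: "finite A"
    by (rule finite_subset[of _ "\<Pi>\<^sub>E i\<in>{..<ss}. V"]) (auto simp: A_def T_def intro!: finite_PiE)
  have cA: "card A = (\<Prod>i<ss. q ^ n - q ^ i)" unfolding A_def V_card[symmetric]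
    by (rule card_T[OF V_subsp V_fin])
  have "card A \<le> card (\<Union>c\<in>Cset. fib c)"
    by (rule card_mono[OF _ A_sub]) (intro finite_UN_I Cset_fin, use finA in \<open>auto simp: fib_def\<close>)
  also have "\<dots> \<le> (\<Sum>c\<in>Cset. card (fib c))" by (rule card_UN_le[OF Cset_fin])
  also have "\<dots> \<le> card Cset * (\<Prod>i<ss. q ^ ss - q ^ i)"
    using sum_bounded_above[of Cset "\<lambda>c. card (fib c)", OF fib_le] by simp
  finally have le: "(\<Prod>i<ss. q ^ n - q ^ i) \<le> card Cset * (\<Prod>i<ss. q ^ ss - q ^ i)" using cA by simp
  have qi: "q ^ i \<le> q ^ j" if "i \<le> j" for i j using that q_pos by (simp add: power_increasing)
  have qlt: "q ^ i < q ^ j" if "i < j" for i j using that q2 by (simp add: power_strict_increasing)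
  have pos: "(0::real) < (\<Prod>i<ss. real q ^ ss - real q ^ i)"
    by (rule prod_pos) (use q2 in \<open>auto simp: power_strict_increasing\<close>)
  have e1: "real (\<Prod>i<ss. q ^ n - q ^ i) = (\<Prod>i<ss. real q ^ n - real q ^ i)"
    unfolding of_nat_prod by (rule prod.cong) (use qi ss_ge in \<open>auto simp: of_nat_diff\<close>)
  have e2: "real (\<Prod>i<ss. q ^ ss - q ^ i) = (\<Prod>i<ss. real q ^ ss - real q ^ i)"
    unfolding of_nat_prod by (rule prod.cong) (use qi in \<open>auto simp: of_nat_diff\<close>)
  have "gauss_binom q n ss = (\<Prod>i<ss. real q ^ n - real q ^ i) / (\<Prod>i<ss. real q ^ ss - real q ^ i)"
    unfolding gauss_binom_def by (rule prod_dividef)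
  also have "\<dots> \<le> real (card Cset)"
  proof -
    have "real (\<Prod>i<ss. q ^ n - q ^ i) \<le> real (card Cset * (\<Prod>i<ss. q ^ ss - q ^ i))"
      using le by (rule of_nat_mono)
    then have "(\<Prod>i<ss. real q ^ n - real q ^ i) \<le> real (card Cset) * (\<Prod>i<ss. real q ^ ss - real q ^ i)"
      unfolding of_nat_mult e1[symmetric] e2[symmetric] .
    then show ?thesis by (simp add: pos_divide_le_eq[OF pos])
  qed
  finally show ?thesis .
qed

lemma rank_P:
  assumes c: "c \<in> Cset" and x: "\<And>i. i < n \<Longrightarrow> x i = - P ss c (\<alpha> i)"
  shows "rk q n x = \<tau>"
proof -
  obtain w where w: "w \<in> T V ss" "\<forall>l<ss. P ss c (w l) = 0" using c unfolding Cset_def by blast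
  have wV: "\<And>l. l \<in> {..<ss} \<Longrightarrow> w l \<in> V" using w(1) by (auto simp: T_def PiE_iff)
  have wi: "lin_indep_Fq q {..<ss} w" using w(1) by (simp add: T_def)
  define K where "K = {y \<in> V. P ss c y = 0}"
  have "span {..<ss} w \<subseteq> K"
  proof
    fix y assume y: "y \<in> span {..<ss} w"
    have "y \<in> V" using span_subsp[where S=V and I="{..<ss}" and w=w, OF V_subsp wV finite_lessThan] y by blast
    moreover have "P ss c y = 0" unfolding P_def
      by (rule lin_vanish_span[OF finite_lessThan _ y]) (use w(2) in \<open>auto simp: P_def\<close>)
    ultimately show "y \<in> K" by (simp add: K_def)
  qed
  then have "q ^ ss \<le> card K"
    using card_span_indep[OF finite_lessThan wi] card_mono[of K "span {..<ss} w"] by (simp add: K_def)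
  moreover have "card K \<le> q ^ ss"
  proof -
    have "card K \<le> card {x. P ss c x = 0}" by (rule card_mono) (auto simp: K_def)
    then show ?thesis using P_roots[of ss c] by simp
  qed
  ultimately have cK: "card K = q ^ ss" by simp
  have "card V = card (P ss c ` V) * card {y \<in> V. P ss c y = 0}"
  proof (rule card_ker_img[OF V_fin])
    fix x y assume "x \<in> V" "y \<in> V"
    then show "x - y \<in> V" by (rule subsp_diff[OF V_subsp])
    show "P ss c (x - y) = P ss c x - P ss c y" unfolding P_def by (rule lin_diff)
  qed
  then have "q ^ n = card (P ss c ` V) * q ^ ss" using cK V_card by (simp add: K_def)
  moreover have "q ^ n = q ^ \<tau> * q ^ ss" using ss_ge \<tau>k by (simp add: power_add[symmetric])
  ultimately have cimg: "card (P ss c ` V) = q ^ \<tau>" using q_pos by simp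
  have "span {..<n} x = span {..<n} (\<lambda>i. - P ss c (\<alpha> i))"
    by (rule span_cong) (simp add: x)
  also have "\<dots> = span {..<n} (\<lambda>i. P ss c (\<alpha> i))" by (rule span_neg)
  also have "\<dots> = P ss c ` V" unfolding P_def by (rule lin_image_span[symmetric]) simp
  finally have "q ^ rk q n x = q ^ \<tau>" using rank_span[of n x] cimg by simp
  then show ?thesis using q2 by simp
qed

lemma exists_r:
  "\<exists>r\<in>words n. gauss_binom q n ss / (real q ^ m) ^ (ss - k)
      \<le> real (card (gabidulin q n k \<alpha> \<inter> rank_sphere q n \<tau> r))"
proof -
  define hi where "hi c = restrict c {k..<ss}" for c :: "nat \<Rightarrow> 'a"
  define H where "H = hi ` Cset"
  define fb where "fb h = card {c \<in> Cset. hi c = h}" for h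
  have finH: "finite H" unfolding H_def using Cset_fin by simp
  have gpos: "0 < gauss_binom q n ss"
  proof -
    have "0 < real q ^ ((n - ss) * ss)" using q_pos by simp
    then show ?thesis using gauss_ge[OF ss_ge(2)] by (rule less_le_trans)
  qed
  then have "Cset \<noteq> {}" using card_Cset by auto
  then have Hne: "H \<noteq> {}" unfolding H_def by simp
  have "Max (fb ` H) \<in> fb ` H" using finH Hne by (intro Max_in) auto
  then obtain h0 where h0: "h0 \<in> H" "fb h0 = Max (fb ` H)" by (metis imageE)
  have "card Cset = (\<Sum>h\<in>H. fb h)" unfolding H_def fb_def by (rule card_fibres[OF Cset_fin])
  also have "\<dots> \<le> card H * fb h0"
    using sum_bounded_above[of H fb "fb h0"] h0 finH by simp
  finally have c1: "card Cset \<le> card H * fb h0" .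
  have "card H \<le> card (\<Pi>\<^sub>E j\<in>{k..<ss}. (UNIV :: 'a set))"
  proof (rule card_mono)
    show "finite (\<Pi>\<^sub>E j\<in>{k..<ss}. (UNIV :: 'a set))" by (rule finite_PiE) simp_all
    show "H \<subseteq> (\<Pi>\<^sub>E j\<in>{k..<ss}. (UNIV :: 'a set))" unfolding H_def hi_def by (rule image_subsetI) simp
  qed
  also have "\<dots> = (q ^ m) ^ (ss - k)" by (simp add: card_PiE cardK)
  finally have c2: "card H \<le> (q ^ m) ^ (ss - k)" .
  have "real (card Cset) \<le> real (card H * fb h0)" using c1 by (rule of_nat_mono)
  then have "gauss_binom q n ss \<le> real (card H * fb h0)" by (rule order_trans[OF card_Cset])
  also have "\<dots> \<le> real ((q ^ m) ^ (ss - k) * fb h0)" using c2 by (intro of_nat_mono mult_le_mono1)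
  finally have "gauss_binom q n ss \<le> (real q ^ m) ^ (ss - k) * real (fb h0)" by simp
  then have gb: "gauss_binom q n ss / (real q ^ m) ^ (ss - k) \<le> real (fb h0)"
    using q_pos by (simp add: pos_divide_le_eq mult.commute)
  define r where "r = (\<lambda>i. if i < n then \<alpha> i ^ (q ^ ss) + (\<Sum>j\<in>{k..<ss}. h0 j * \<alpha> i ^ (q ^ j)) else 0)"
  define g where "g c = (\<lambda>i. if i < n then (\<Sum>j<k. (- c j) * \<alpha> i ^ (q ^ j)) else (0::'a))" for c :: "nat \<Rightarrow> 'a"
  define F0 where "F0 = {c \<in> Cset. hi c = h0}"
  have rw: "r \<in> words n" by (simp add: r_def words_def)
  have split: "(\<Sum>j<ss. f j) = (\<Sum>j<k. f j) + (\<Sum>j\<in>{k..<ss}. f j)" for f :: "nat \<Rightarrow> 'a"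
  proof -
    have "{..<ss} = {..<k} \<union> {k..<ss}" using ss_ge by auto
    moreover have "sum f ({..<k} \<union> {k..<ss}) = sum f {..<k} + sum f {k..<ss}"
      by (rule sum.union_disjoint) auto
    ultimately show ?thesis by simp
  qed
  have gsub: "g c \<in> gabidulin q n k \<alpha> \<inter> rank_sphere q n \<tau> r" if c: "c \<in> F0" for c
  proof -
    have cC: "c \<in> Cset" and hc: "hi c = h0" using c by (auto simp: F0_def)
    have ch: "c j = h0 j" if "j \<in> {k..<ss}" for j using hc that by (auto simp: hi_def)
    have diff: "(g c - r) i = - P ss c (\<alpha> i)" if "i < n" for i
    proof -
      have "P ss c (\<alpha> i) = (\<Sum>j<k. c j * \<alpha> i ^ (q ^ j)) + (\<Sum>j\<in>{k..<ss}. h0 j * \<alpha> i ^ (q ^ j))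
          + \<alpha> i ^ (q ^ ss)"
        unfolding P_expand lin_def split using ch by simp
      then show ?thesis using that by (simp add: g_def r_def sum_negf)
    qed
    have "g c \<in> gabidulin q n k \<alpha>" unfolding gabidulin_def g_def
      by (rule CollectI, rule exI[of _ "\<lambda>j. - c j"]) simp
    moreover have "g c \<in> words n" by (simp add: g_def words_def)
    moreover have "rk q n (g c - r) = \<tau>" by (rule rank_P[OF cC diff])
    ultimately show ?thesis by (simp add: rank_sphere_def)
  qed
  have ginj: "inj_on g F0"
  proof (rule inj_onI)
    fix c c' assume c: "c \<in> F0" "c' \<in> F0" and eq: "g c = g c'"
    have z: "lin (\<lambda>j. (- c j) - (- c' j)) k (\<alpha> i) = 0" if "i \<in> {..<n}" for i
      using fun_cong[OF eq, of i] that by (simp add: lin_sub_coeff lin_def g_def sum_negf)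
    have lo: "c j = c' j" if "j < k" for j
      using lin_zero_coeffs[OF finite_lessThan \<alpha>i _ z that] kn by simp
    have cc: "c \<in> Cset" "c' \<in> Cset" using c unfolding F0_def by blast+
    have PE: "c \<in> (\<Pi>\<^sub>E j\<in>{..<ss}. (UNIV :: 'a set))" "c' \<in> (\<Pi>\<^sub>E j\<in>{..<ss}. (UNIV :: 'a set))"
      using cc unfolding Cset_def by blast+
    have hh: "hi c = hi c'" using c unfolding F0_def by simp
    show "c = c'"
    proof
      fix j
      show "c j = c' j"
      proof (cases "j < k")
        case True then show ?thesis by (rule lo)
      next
        case False
        show ?thesis
        proof (cases "j < ss")
          case True
          have "restrict c {k..<ss} j = restrict c' {k..<ss} j" using hh unfolding hi_def by simp
          then show ?thesis using True \<open>\<not> j < k\<close> by simp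
        next
          case False
          then have "j \<notin> {..<ss}" by simp
          then show ?thesis using PiE_arb[OF PE(1)] PiE_arb[OF PE(2)] by simp
        qed
      qed
    qed
  qed
  have fin: "finite (gabidulin q n k \<alpha> \<inter> rank_sphere q n \<tau> r)"
  proof (rule finite_subset[OF _ words_finite])
    show "gabidulin q n k \<alpha> \<inter> rank_sphere q n \<tau> r \<subseteq> words n" unfolding rank_sphere_def by blast
  qed
  have "fb h0 = card (g ` F0)" unfolding fb_def F0_def[symmetric] using card_image[OF ginj] by simp
  also have "\<dots> \<le> card (gabidulin q n k \<alpha> \<inter> rank_sphere q n \<tau> r)"
    by (rule card_mono[OF fin]) (use gsub in auto)
  finally have "real (fb h0) \<le> real (card (gabidulin q n k \<alpha> \<inter> rank_sphere q n \<tau> r))"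
    by (rule of_nat_mono)
  then have "gauss_binom q n ss / (real q ^ m) ^ (ss - k)
      \<le> real (card (gabidulin q n k \<alpha> \<inter> rank_sphere q n \<tau> r))" by (rule order_trans[OF gb])
  then show ?thesis using rw by blast
qed

end
end

lemma powi_part:
  fixes q m n k d \<tau> :: nat
  assumes q: "q > 0" and kn: "k \<le> n" and d: "d = n - k + 1" and tk: "\<tau> \<le> n - k"
  shows "real q ^ m * real q powi (int \<tau> * int (m + n) - int \<tau> ^ 2 - int m * int d)
       = real q ^ (\<tau> * (n - \<tau>)) / (real q ^ m) ^ (n - \<tau> - k)"
proof -
  have e: "int m + (int \<tau> * int (m + n) - int \<tau> ^ 2 - int m * int d)
      = int (\<tau> * (n - \<tau>)) - int (m * (n - \<tau> - k))"
  proof -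
    have a: "int (\<tau> * (n - \<tau>)) = int \<tau> * (int n - int \<tau>)" using kn tk by (simp add: of_nat_diff)
    have b: "int (m * (n - \<tau> - k)) = int m * (int n - int \<tau> - int k)" using kn tk by (simp add: of_nat_diff)
    have c: "int d = int n - int k + 1" using d kn by simp
    show ?thesis unfolding a b c by (simp add: algebra_simps power2_eq_square)
  qed
  have q0: "real q \<noteq> 0" using q by simp
  have "real q ^ m * real q powi (int \<tau> * int (m + n) - int \<tau> ^ 2 - int m * int d)
      = real q powi (int m + (int \<tau> * int (m + n) - int \<tau> ^ 2 - int m * int d))"
    using q0 by (simp add: power_int_add)
  also have "\<dots> = real q powi (int (\<tau> * (n - \<tau>)) - int (m * (n - \<tau> - k)))" using e by simp
  also have "\<dots> = real q powi (int (\<tau> * (n - \<tau>))) / real q powi (int (m * (n - \<tau> - k)))"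
    by (rule power_int_diff) (use q0 in simp)
  also have "\<dots> = real q ^ (\<tau> * (n - \<tau>)) / real q ^ (m * (n - \<tau> - k))"
    by (simp only: power_int_of_nat)
  also have "\<dots> = real q ^ (\<tau> * (n - \<tau>)) / (real q ^ m) ^ (n - \<tau> - k)" by (simp add: power_mult)
  finally show ?thesis .
qed

theorem theorem1:
  fixes \<alpha> :: "nat \<Rightarrow> 'a::{finite,field}"
    and q m n k d \<tau> :: nat
  assumes "prime_power q"
    and "card (UNIV :: 'a set) = q ^ m"
    and "0 < n" and "n \<le> m" and "0 < k" and "k \<le> n"
    and "\<alpha> \<in> words n" and "lin_indep_Fq q {..<n} \<alpha>"
    and "d = n - k + 1"
    and "\<tau> < d"
  shows "\<exists>r \<in> words n.
     card (gabidulin q n k \<alpha> \<inter> rank_sphere q n \<tau> r) \<le> max_list_size q n \<tau> (gabidulin q n k \<alpha>)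
   \<and> gauss_binom q n (n - \<tau>) / (real q ^ m) ^ (n - \<tau> - k)
       \<le> real (card (gabidulin q n k \<alpha> \<inter> rank_sphere q n \<tau> r))
   \<and> real q ^ m * real q powi (int \<tau> * int (m + n) - int \<tau> ^ 2 - int m * int d)
       \<le> gauss_binom q n (n - \<tau>) / (real q ^ m) ^ (n - \<tau> - k)
   \<and> (n = m \<longrightarrow> real q ^ n * real q powi (2 * int n * int \<tau> - int \<tau> ^ 2 - int n * int d)
       \<le> real (max_list_size q n \<tau> (gabidulin q n k \<alpha>)))"
proof -
  note pp = assms(1) and cK = assms(2)
  have m1: "1 \<le> m" using assms(3,4) by simp
  have tk: "\<tau> \<le> n - k" using assms(6,9,10) by simp
  have ss: "n - \<tau> - k = (n - \<tau>) - k" by simp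
  obtain r where r: "r \<in> words n"
    "gauss_binom q n (n - \<tau>) / (real q ^ m) ^ (n - \<tau> - k)
      \<le> real (card (gabidulin q n k \<alpha> \<inter> rank_sphere q n \<tau> r))"
    using exists_r[OF pp cK m1 assms(3,4,5,6,7,8) tk] by blast
  let ?G = "gabidulin q n k \<alpha>"
  have wf: "finite (words n :: (nat \<Rightarrow> 'a) set)" by (rule words_finite[OF pp cK m1])
  have c1: "card (?G \<inter> rank_sphere q n \<tau> r) \<le> max_list_size q n \<tau> ?G"
  proof -
    have "card (?G \<inter> rank_sphere q n \<tau> r) \<le> card (?G \<inter> rank_ball q n \<tau> r)"
    proof (rule card_mono)
      show "finite (?G \<inter> rank_ball q n \<tau> r)"
        by (rule finite_subset[OF _ wf]) (unfold rank_ball_def, blast)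
      show "?G \<inter> rank_sphere q n \<tau> r \<subseteq> ?G \<inter> rank_ball q n \<tau> r"
        unfolding rank_sphere_def rank_ball_def by auto
    qed
    also have "\<dots> \<le> max_list_size q n \<tau> ?G" unfolding max_list_size_def
      by (rule Max_ge) (use wf r(1) in auto)
    finally show ?thesis .
  qed
  have q0: "q > 0" using q_pos[OF pp cK m1] .
  have c3: "real q ^ m * real q powi (int \<tau> * int (m + n) - int \<tau> ^ 2 - int m * int d)
       \<le> gauss_binom q n (n - \<tau>) / (real q ^ m) ^ (n - \<tau> - k)"
  proof -
    have "real q ^ (\<tau> * (n - \<tau>)) \<le> gauss_binom q n (n - \<tau>)"
    proof -
      have "n - (n - \<tau>) = \<tau>" using tk by simp
      then show ?thesis using gauss_ge[OF pp cK m1, of "n - \<tau>" n] by simp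
    qed
    then show ?thesis unfolding powi_part[OF q0 assms(6,9) tk]
      by (rule divide_right_mono) simp
  qed
  have c4: "n = m \<longrightarrow> real q ^ n * real q powi (2 * int n * int \<tau> - int \<tau> ^ 2 - int n * int d)
       \<le> real (max_list_size q n \<tau> ?G)"
  proof
    assume nm: "n = m"
    have eq: "2 * int n * int \<tau> - int \<tau> ^ 2 - int n * int d = int \<tau> * int (m + n) - int \<tau> ^ 2 - int m * int d"
      using nm by (simp add: algebra_simps)
    have "real q ^ n * real q powi (2 * int n * int \<tau> - int \<tau> ^ 2 - int n * int d)
        = real q ^ m * real q powi (int \<tau> * int (m + n) - int \<tau> ^ 2 - int m * int d)"
      unfolding eq by (simp only: nm)
    also have "\<dots> \<le> real (card (?G \<inter> rank_sphere q n \<tau> r))" using c3 r(2) by linarith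
    also have "\<dots> \<le> real (max_list_size q n \<tau> ?G)" using c1 by simp
    finally show "real q ^ n * real q powi (2 * int n * int \<tau> - int \<tau> ^ 2 - int n * int d)
       \<le> real (max_list_size q n \<tau> ?G)" .
  qed
  show ?thesis using r c1 c3 c4 by blast
qed

end
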